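(* Let $m$ inputs have sizes $w_1,\dots,w_m$, each at most $\frac{q}{2}$, with $s=\sum_{i} w_i$, where $q$ is the reducer capacity. Consider the following algorithm: pack the inputs into bins of capacity $\frac{q}{2}$ using First-Fit Decreasing (or Best-Fit Decreasing); if $x$ bins are obtained, create $\frac{x(x-1)}{2}$ reducers, one for each unordered pair of distinct bins, and assign to it all inputs of both bins. The resulting A2A mapping schema uses at most $\frac{8s^2}{q^2}$ reducers and has communication cost at most $\frac{4s^2}{q}$.
   Context: An A2A mapping schema for inputs with sizes $w_1,\dots,w_m$ and reducer capacity $q$ is an assignment of the inputs to a collection of reducers (each input may go to several reducers) such that every reducer receives inputs of total size at most $q$ and every pair of distinct inputs is assigned together to at least one reducer. The communication cost is the sum over reducers of the total size of the inputs assigned to it. *)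

theory Defs
  imports Complex_Main
begin

text \<open>Inputs are indexed by natural numbers 0..m-1; the size of input i is w i.
  A bin (and a reducer) is represented by the list of the indices of its inputs.\<close>

definition load :: "(nat \<Rightarrow> real) \<Rightarrow> nat list \<Rightarrow> real" where
  "load w b = (\<Sum>i\<leftarrow>b. w i)"

fun ff_insert :: "real \<Rightarrow> (nat \<Rightarrow> real) \<Rightarrow> nat \<Rightarrow> nat list list \<Rightarrow> nat list list" where
  "ff_insert cap w i [] = [[i]]"
| "ff_insert cap w i (b # bs) =
     (if load w b + w i \<le> cap then (i # b) # bs else b # ff_insert cap w i bs)"

definition bf_insert :: "real \<Rightarrow> (nat \<Rightarrow> real) \<Rightarrow> nat \<Rightarrow> nat list list \<Rightarrow> nat list list" where
  "bf_insert cap w i bs =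
     (let cands = filter (\<lambda>j. load w (bs ! j) + w i \<le> cap) [0..<length bs] in
      if cands = [] then bs @ [[i]]
      else let j = foldl (\<lambda>a k. if load w (bs ! a) < load w (bs ! k) then k else a)
                         (hd cands) (tl cands)
           in bs[j := i # bs ! j])"

definition first_fit :: "real \<Rightarrow> (nat \<Rightarrow> real) \<Rightarrow> nat list \<Rightarrow> nat list list" where
  "first_fit cap w order = foldl (\<lambda>bs i. ff_insert cap w i bs) [] order"

definition best_fit :: "real \<Rightarrow> (nat \<Rightarrow> real) \<Rightarrow> nat list \<Rightarrow> nat list list" where
  "best_fit cap w order = foldl (\<lambda>bs i. bf_insert cap w i bs) [] order"

definition decreasing_order :: "(nat \<Rightarrow> real) \<Rightarrow> nat \<Rightarrow> nat list \<Rightarrow> bool" where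
  "decreasing_order w m order \<longleftrightarrow>
     distinct order \<and> set order = {..<m} \<and> sorted_wrt (\<lambda>i j. w j \<le> w i) order"

definition pair_reducers :: "nat list list \<Rightarrow> nat set list" where
  "pair_reducers bins =
     [set (bins ! j) \<union> set (bins ! k). j \<leftarrow> [0..<length bins], k \<leftarrow> [Suc j..<length bins]]"

definition comm_cost :: "(nat \<Rightarrow> real) \<Rightarrow> nat set list \<Rightarrow> real" where
  "comm_cost w R = (\<Sum>r\<leftarrow>R. \<Sum>i\<in>r. w i)"

end

theory Submission
  imports Defs
begin

definition shape :: "real \<Rightarrow> (nat \<Rightarrow> real) \<Rightarrow> nat \<Rightarrow> nat list list \<Rightarrow> nat list list \<Rightarrow> bool" where
  "shape cap w e bs bs' \<longleftrightarrow> (\<exists>j<length bs. bs' = bs[j := e # bs!j])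
     \<or> (bs' = bs @ [[e]] \<and> (\<forall>j<length bs. load w (bs!j) + w e > cap))"

definition inv :: "real \<Rightarrow> (nat \<Rightarrow> real) \<Rightarrow> nat list list \<Rightarrow> bool" where
  "inv cap w bs \<longleftrightarrow> (\<forall>b\<in>set bs. \<forall>i\<in>set b. 0 \<le> w i)
     \<and> (\<forall>j k. j < k \<and> k < length bs \<longrightarrow> load w (bs!j) + load w (bs!k) > cap)"

lemma load_cons[simp]: "load w (e # b) = w e + load w b"
  by (simp add: load_def)

lemma load_nonneg: "\<forall>i\<in>set b. 0 \<le> w i \<Longrightarrow> 0 \<le> load w b"
  unfolding load_def by (induction b) auto

lemma ff_shape: "shape cap w e bs (ff_insert cap w e bs)"
proof (induction bs)
  case Nil
  then show ?case by (simp add: shape_def)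
next
  case (Cons b bs)
  show ?case
  proof (cases "load w b + w e \<le> cap")
    case True
    then show ?thesis unfolding shape_def
      by (intro disjI1 exI[of _ 0]) auto
  next
    case False
    from Cons.IH[unfolded shape_def] show ?thesis
    proof (elim disjE)
      assume "\<exists>j<length bs. ff_insert cap w e bs = bs[j := e # bs ! j]"
      then obtain j where "j < length bs" "ff_insert cap w e bs = bs[j := e # bs ! j]" by blast
      then have "ff_insert cap w e (b # bs) = (b # bs)[Suc j := e # (b # bs) ! Suc j]" "Suc j < length (b # bs)"
        using False by auto
      then show ?thesis unfolding shape_def by blast
    next
      assume A: "ff_insert cap w e bs = bs @ [[e]] \<and> (\<forall>j<length bs. cap < load w (bs ! j) + w e)"
      have "\<forall>j<length (b#bs). cap < load w ((b#bs) ! j) + w e"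
      proof (intro allI impI)
        fix j assume "j < length (b#bs)"
        then show "cap < load w ((b#bs) ! j) + w e" using A False by (cases j) auto
      qed
      then show ?thesis using A False unfolding shape_def by auto
    qed
  qed
qed

lemma foldl_choice: "foldl (\<lambda>a k. if P a k then k else a) a0 ks \<in> insert a0 (set ks)"
proof (induction ks arbitrary: a0)
  case Nil
  then show ?case by simp
next
  case (Cons a ks)
  have "foldl (\<lambda>a k. if P a k then k else a) a0 (a # ks)
     = foldl (\<lambda>a k. if P a k then k else a) (if P a0 a then a else a0) ks" by simp
  then show ?case using Cons.IH[of "if P a0 a then a else a0"] by (auto split: if_splits)
qed

lemma sum_list_upd_real: "j < length xs \<Longrightarrow> sum_list (xs[j := v]) = sum_list xs - xs ! j + (v::real)"
  by (induction xs arbitrary: j) (auto split: nat.splits)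

lemma bf_shape: "shape cap w e bs (bf_insert cap w e bs)"
proof -
  define cands where "cands = filter (\<lambda>j. load w (bs ! j) + w e \<le> cap) [0..<length bs]"
  show ?thesis
  proof (cases "cands = []")
    case True
    then have "\<forall>j<length bs. load w (bs!j) + w e > cap"
      unfolding cands_def by (force simp: filter_empty_conv)
    then show ?thesis using True unfolding bf_insert_def shape_def cands_def[symmetric] by auto
  next
    case False
    define j where "j = foldl (\<lambda>a k. if load w (bs ! a) < load w (bs ! k) then k else a)
                         (hd cands) (tl cands)"
    have "j \<in> insert (hd cands) (set (tl cands))" unfolding j_def by (rule foldl_choice)
    also have "\<dots> = set cands" using False by (cases cands) auto
    finally have "j < length bs" unfolding cands_def by auto
    moreover have "bf_insert cap w e bs = bs[j := e # bs ! j]"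
      using False unfolding bf_insert_def cands_def[symmetric] j_def Let_def by simp
    ultimately show ?thesis unfolding shape_def by blast
  qed
qed

lemma inv_step:
  assumes "inv cap w bs" "0 \<le> w e" "shape cap w e bs bs'"
  shows "inv cap w bs' \<and> sum_list (map (load w) bs') = sum_list (map (load w) bs) + w e"
  using assms(3) unfolding shape_def
proof
  assume "\<exists>j<length bs. bs' = bs[j := e # bs ! j]"
  then obtain j where j: "j < length bs" and b': "bs' = bs[j := e # bs ! j]" by blast
  have ld: "k < length bs \<Longrightarrow> load w (bs'!k) \<ge> load w (bs!k)" for k
    using j assms(2) unfolding b' by (cases "k = j") auto
  have nn: "\<forall>b\<in>set bs'. \<forall>i\<in>set b. 0 \<le> w i"
  proof (intro ballI)
    fix b i assume "b \<in> set bs'" "i \<in> set b"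
    then obtain k where k: "k < length bs'" "b = bs'!k" by (auto simp: in_set_conv_nth)
    show "0 \<le> w i"
    proof (cases "k = j")
      case True
      then show ?thesis using k \<open>i \<in> set b\<close> j assms(1,2) unfolding b' inv_def
        by (auto simp: nth_mem)
    next
      case False
      then show ?thesis using k \<open>i \<in> set b\<close> j assms(1) unfolding b' inv_def
        by (auto simp: nth_mem)
    qed
  qed
  have "\<forall>j k. j < k \<and> k < length bs' \<longrightarrow> load w (bs'!j) + load w (bs'!k) > cap"
  proof (intro allI impI)
    fix a k assume "a < k \<and> k < length bs'"
    then have "a < k" "k < length bs" using b' by auto
    then have "load w (bs!a) + load w (bs!k) > cap" using assms(1) unfolding inv_def by blast
    then show "load w (bs'!a) + load w (bs'!k) > cap" using ld[of a] ld[of k] \<open>a < k\<close> \<open>k < length bs\<close> by auto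
  qed
  moreover have "sum_list (map (load w) bs') = sum_list (map (load w) bs) + w e"
    unfolding b' using j by (simp add: map_update sum_list_upd_real)
  ultimately show ?thesis using nn unfolding inv_def by blast
next
  assume A: "bs' = bs @ [[e]] \<and> (\<forall>j<length bs. cap < load w (bs ! j) + w e)"
  have "\<forall>j k. j < k \<and> k < length bs' \<longrightarrow> load w (bs'!j) + load w (bs'!k) > cap"
  proof (intro allI impI)
    fix a k assume ak: "a < k \<and> k < length bs'"
    show "load w (bs'!a) + load w (bs'!k) > cap"
    proof (cases "k < length bs")
      case True
      then show ?thesis using ak A assms(1) unfolding inv_def by (auto simp: nth_append)
    next
      case False
      then have "k = length bs" using ak A by auto
      then show ?thesis using ak A by (auto simp: nth_append load_def)
    qed
  qed
  then show ?thesis using A assms(1,2) unfolding inv_def by (auto simp: load_def)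
qed

lemma inv_fold:
  assumes "\<And>bs e. shape cap w e bs (f bs e)"
  shows "inv cap w bs \<Longrightarrow> \<forall>e\<in>set xs. 0 \<le> w e \<Longrightarrow> inv cap w (foldl f bs xs) \<and>
     sum_list (map (load w) (foldl f bs xs)) = sum_list (map (load w) bs) + sum_list (map w xs)"
proof (induction xs arbitrary: bs)
  case Nil
  then show ?case by simp
next
  case (Cons x xs)
  have "inv cap w (f bs x) \<and> sum_list (map (load w) (f bs x)) = sum_list (map (load w) bs) + w x"
    using inv_step[OF Cons.prems(1) _ assms] Cons.prems(2) by auto
  then show ?case using Cons.IH[of "f bs x"] Cons.prems(2) by auto
qed

lemma T_sum:
  fixes L :: "nat \<Rightarrow> real"
  shows "(\<Sum>j<x. \<Sum>k\<in>{Suc j..<x}. L j + L k) = (real x - 1) * (\<Sum>k<x. L k)"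
proof (induction x)
  case 0
  then show ?case by simp
next
  case (Suc x)
  have "(\<Sum>j<Suc x. \<Sum>k\<in>{Suc j..<Suc x}. L j + L k)
      = (\<Sum>j<x. (\<Sum>k\<in>{Suc j..<x}. L j + L k) + (L j + L x))"
    by (simp add: sum.op_ivl_Suc)
  also have "\<dots> = (real x - 1) * (\<Sum>k<x. L k) + (\<Sum>j<x. L j) + real x * L x"
    using Suc.IH by (simp add: sum.distrib)
  also have "\<dots> = (real (Suc x) - 1) * (\<Sum>k<Suc x. L k)"
    by (simp add: algebra_simps)
  finally show ?case .
qed

lemma P_sum:
  shows "2 * (\<Sum>j<x. \<Sum>k\<in>{Suc j..<x}. (1::real)) = real x * (real x - 1)"
proof (induction x)
  case 0
  then show ?case by simp
next
  case (Suc x)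
  have "(\<Sum>j<Suc x. \<Sum>k\<in>{Suc j..<Suc x}. (1::real))
      = (\<Sum>j<x. (\<Sum>k\<in>{Suc j..<x}. (1::real)) + 1)"
    by (simp add: sum.op_ivl_Suc)
  also have "\<dots> = (\<Sum>j<x. (\<Sum>k\<in>{Suc j..<x}. (1::real))) + real x"
    by (simp add: sum.distrib sum_subtractf)
  finally show ?case using Suc.IH by (simp add: algebra_simps sum_subtractf)
qed

lemma sum_set_le: "\<forall>i\<in>set b. 0 \<le> w i \<Longrightarrow> (\<Sum>i\<in>set b. w i) \<le> load w b"
proof (induction b)
  case Nil
  then show ?case by (simp add: load_def)
next
  case (Cons a b)
  have "(\<Sum>i\<in>set (a#b). w i) \<le> w a + (\<Sum>i\<in>set b. w i)"
    using Cons.prems by (auto simp: sum.insert_if)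
  then show ?case using Cons by auto
qed

lemma sum_list_concat_real: "sum_list (concat xss) = sum_list (map sum_list xss)"
  by (induction xss) auto

lemma pair_list_sum:
  "sum_list (map g (pair_reducers bins)) =
     (\<Sum>j<length bins. \<Sum>k\<in>{Suc j..<length bins}. g (set (bins ! j) \<union> set (bins ! k)))"
  unfolding pair_reducers_def
  by (simp add: sum_list_concat_real map_concat comp_def sum_set_upt_conv_sum_list_nat[symmetric] atLeast0LessThan)

theorem theorem5:
  fixes w :: "nat \<Rightarrow> real" and m :: nat and q :: real
    and order :: "nat list" and bins :: "nat list list"
  assumes q_pos: "q > 0"
    and w_nonneg: "\<forall>i<m. 0 \<le> w i"
    and w_small: "\<forall>i<m. w i \<le> q / 2"
    and ord: "decreasing_order w m order"
    and alg: "bins = first_fit (q / 2) w order \<or> bins = best_fit (q / 2) w order"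
  shows "real (length (pair_reducers bins)) \<le> 8 * (\<Sum>i<m. w i)^2 / q^2
       \<and> comm_cost w (pair_reducers bins) \<le> 4 * (\<Sum>i<m. w i)^2 / q"
proof -
  define c where "c = q / 2"
  define x where "x = length bins"
  define L where "L k = load w (bins ! k)" for k
  define s where "s = (\<Sum>i<m. w i)"
  have c_pos: "c > 0" using q_pos c_def by simp
  have ordw: "\<forall>e\<in>set order. 0 \<le> w e" using ord w_nonneg unfolding decreasing_order_def by auto
  have inv0: "inv c w []" unfolding inv_def by simp
  have res: "inv c w bins \<and> sum_list (map (load w) bins) = sum_list (map w order)"
    using alg
  proof
    assume "bins = first_fit (q / 2) w order"
    then show ?thesis using inv_fold[of c w "\<lambda>bs i. ff_insert c w i bs", OF ff_shape inv0 ordw]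
      unfolding first_fit_def c_def by simp
  next
    assume "bins = best_fit (q / 2) w order"
    then show ?thesis using inv_fold[of c w "\<lambda>bs i. bf_insert c w i bs", OF bf_shape inv0 ordw]
      unfolding best_fit_def c_def by simp
  qed
  have "sum_list (map w order) = s"
    using ord unfolding decreasing_order_def s_def by (simp add: sum_list_distinct_conv_sum_set)
  then have sumL: "(\<Sum>k<x. L k) = s"
    using res unfolding x_def L_def by (simp add: sum_list_sum_nth atLeast0LessThan)
  have nn: "\<forall>b\<in>set bins. \<forall>i\<in>set b. 0 \<le> w i" using res unfolding inv_def by blast
  have pair: "\<And>j k. j < k \<Longrightarrow> k < x \<Longrightarrow> L j + L k > c" using res unfolding inv_def x_def L_def by blast
  have s_nn: "s \<ge> 0" unfolding s_def using w_nonneg by (auto intro: sum_nonneg)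
  define P where "P = (\<Sum>j<x. \<Sum>k\<in>{Suc j..<x}. (1::real))"
  define A where "A = (\<Sum>j<x. \<Sum>k\<in>{Suc j..<x}. L j + L k)"
  have A_eq: "A = (real x - 1) * s" unfolding A_def using T_sum[of L x] sumL by simp
  have P_eq: "2 * P = real x * (real x - 1)" unfolding P_def by (rule P_sum)
  have "c * P \<le> A" unfolding P_def A_def sum_distrib_left
    by (intro sum_mono) (auto simp: Suc_le_eq intro!: less_imp_le pair)
  then have "c * (2*P) \<le> 2 * A" by linarith
  then have key: "c * (real x * (real x - 1)) \<le> 2 * ((real x - 1) * s)" by (simp only: P_eq A_eq)
  have len: "real (length (pair_reducers bins)) = P"
  proof -
    have "real (length (pair_reducers bins)) = sum_list (map (\<lambda>_. 1::real) (pair_reducers bins))"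
      by (simp add: sum_list_triv)
    then show ?thesis unfolding pair_list_sum P_def x_def by simp
  qed
  have cc: "comm_cost w (pair_reducers bins) \<le> A"
    unfolding comm_cost_def pair_list_sum A_def x_def[symmetric]
  proof (intro sum_mono)
    fix j k assume jk: "j \<in> {..<x}" "k \<in> {Suc j..<x}"
    have nj: "\<forall>i\<in>set (bins!j). 0 \<le> w i" and nk: "\<forall>i\<in>set (bins!k). 0 \<le> w i"
      using nn jk unfolding x_def by (auto simp: nth_mem)
    have "(\<Sum>i\<in>set (bins ! j) \<union> set (bins ! k). w i) \<le> (\<Sum>i\<in>set (bins ! j). w i) + (\<Sum>i\<in>set (bins ! k). w i)"
      using nj by (simp add: sum_Un) (auto intro!: sum_nonneg)
    also have "\<dots> \<le> L j + L k" unfolding L_def using sum_set_le[OF nj] sum_set_le[OF nk] by simp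
    finally show "(\<Sum>i\<in>set (bins ! j) \<union> set (bins ! k). w i) \<le> L j + L k" .
  qed
  show ?thesis
  proof (cases "x \<ge> 2")
    case True
    then have "real x - 1 > 0" by simp
    have "(real x - 1) * (c * real x) \<le> (real x - 1) * (2*s)" using key by (simp add: algebra_simps)
    then have xs: "c * real x \<le> 2 * s" using \<open>real x - 1 > 0\<close> by simp
    have "real x \<le> 2 * s / c" using xs c_pos by (simp add: field_simps)
    have x_nn: "real x \<ge> 0" by simp
    have "(c * real x) ^ 2 \<le> (2 * s) ^ 2" using xs c_pos x_nn by (intro power_mono) auto
    then have sq: "c^2 * (real x)^2 \<le> 4 * s^2" by (simp add: power_mult_distrib)
    have "2 * P \<le> (real x)^2" using P_eq by (simp add: power2_eq_square algebra_simps)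
    then have "c^2 * (2 * P) \<le> 4 * s^2" using sq c_pos
      by (smt (verit) mult_left_mono zero_le_power2)
    then have "P \<le> 8 * s^2 / q^2" using c_pos unfolding c_def by (simp add: field_simps power2_eq_square)
    moreover have "A \<le> 4 * s^2 / q"
    proof -
      have "A \<le> real x * s" using A_eq s_nn by (simp add: algebra_simps)
      also have "\<dots> \<le> (2 * s / c) * s" using \<open>real x \<le> 2 * s / c\<close> s_nn by (intro mult_right_mono) auto
      also have "\<dots> = 4 * s^2 / q" unfolding c_def using q_pos by (simp add: field_simps power2_eq_square)
      finally show ?thesis .
    qed
    ultimately show ?thesis using len cc unfolding s_def by simp
  next
    case False
    then have "real x - 1 \<le> 0" "real x * (real x - 1) = 0"
      by (auto simp: of_nat_le_iff)
    then have "A \<le> 0" "P = 0" using A_eq P_eq s_nn by (auto simp: mult_nonpos_nonneg)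
    moreover have "0 \<le> 8 * s^2 / q^2" "0 \<le> 4 * s^2 / q" using q_pos by auto
    ultimately show ?thesis using len cc unfolding s_def by linarith
  qed
qed

end
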